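(* Let $P$ be a program. $[\![P]\!]_{\mathrm{GC}}$ is pointer-race-free if and only if there is no computation $\sigma_1.\mathit{act}_1.\sigma_2.\mathit{act}_2\in[\![P]\!]_{\mathrm{GC}}$ satisfying all of the following: - the command of $\mathit{act}_1$ is $\mathtt{free}(x)$ with $h_{\sigma_1}(x)=a\neq\mathtt{seg}$; - the command of $\mathit{act}_2$ accesses $y.\mathtt{next}$ or $y.\mathtt{data}$, or is $\mathtt{free}(y)$, or is an assertion mentioning $y$, for some pointer variable $y$; - $h_{\sigma_1.\mathit{act}_1.\sigma_2}(y)=a$.
   Context: Programs. Programs are sets of threads (while-programs) over pointer variables $\mathit{PVar}$ and data variables $\mathit{DVar}$. The commands are: - $\mathtt{assert}\ c$, with $c::=x=y\mid u=v\mid\neg c$ and complementary asserts at each location; - $x:=\mathtt{malloc}$; - $\mathtt{free}(x)$; - $y:=x.\mathtt{next}$, $x.\mathtt{next}:=y$, $x:=y$; - $u:=x.\mathtt{data}$, $x.\mathtt{data}:=u$; - $u:=\mathit{op}(\dots)$. Heaps. A heap is $h=(\mathit{pval},\mathit{dval})$ with partial maps from $\mathit{PExp}=\mathit{PVar}\cup\{a.\mathtt{next}_i\}$ to $\mathit{Adr}\ni\mathtt{seg}$, and from $\mathit{DExp}=\mathit{DVar}\cup\{a.\mathtt{data}\}$ to data. $h_\sigma$ is the heap after $\sigma$ and $\mathrm{adr}(h)$ the set of addresses occurring in $h$. Garbage-collected semantics $[\![P]\!]_{\mathrm{GC}}$. Initially pointer variables are $\mathtt{seg}$. The rules are: - Assignments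 behave as usual; selector access through $x$ needs $h_\sigma(x)\neq\mathtt{seg}$. - Asserts pass if they hold or a compared pointer is $\mathtt{seg}$. - $\mathtt{free}$ has no update. - Malloc returns a never-used address $a\notin\mathrm{adr}(h_\sigma)$, with $a.\mathtt{data}$ arbitrary and $a.\mathtt{next}_i\mapsto\mathtt{seg}$. Valid pointers. The set $\mathrm{valid}(\sigma)\subseteq\mathit{PExp}$ is all of $\mathit{PExp}$ initially. For each command: - malloc into $x$ adds $x$; - $\mathtt{free}(x)$ with $h_\sigma(x)=a\neq\mathtt{seg}$ removes all $e$ with $h_\sigma(e)=a$ and all $a.\mathtt{next}_i$; - $x:=y$ makes $x$ valid iff $y$ is valid; - $x.\mathtt{next}:=y$ with $h_\sigma(x)=a$ makes $a.\mathtt{next}$ valid iff $y$ is valid; - $y:=x.\mathtt{next}$ with $h_\sigma(x)=a$ makes $y$ valid iff $x$ and $a.\mathtt{next}$ are valid. Pointer race. A pointer race is an action executing $\mathtt{free}(x)$, reading/writing $x.\mathtt{next}$ or $x.\mathtt{data}$, or an assertion mentioning pointer variable $x$, with $x$ not valid before the action. A set is PRF if none of its computations has a prefix that is a pointer race. *)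

theory Defs
  imports Main
begin

text \<open>Addresses: the distinguished value seg and ordinary addresses (an infinite supply,
  indexed by nat).  Selectors next_i are indexed by nat.\<close>
datatype adr = Seg | Adr nat

datatype 'p pexp = PV 'p | Nxt nat nat  \<comment> \<open>Nxt a i  is  a.next_i\<close>
datatype 'd dexp = DV 'd | Dat nat

datatype ('p, 'd) cond = PEq 'p 'p | DEq 'd 'd | Neg "('p, 'd) cond"

datatype ('p, 'd, 'v) cmd =
    Assert "('p, 'd) cond"
  | Malloc 'p
  | Free 'p
  | RdNext 'p 'p nat          \<comment> \<open>RdNext y x i :  y := x.next_i\<close>
  | WrNext 'p nat 'p          \<comment> \<open>WrNext x i y :  x.next_i := y\<close>
  | Asgn 'p 'p                \<comment> \<open>Asgn x y :  x := y\<close>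
  | RdData 'd 'p              \<comment> \<open>RdData u x :  u := x.data\<close>
  | WrData 'p 'd              \<comment> \<open>WrData x u :  x.data := u\<close>
  | Op 'd "'v option list \<Rightarrow> 'v" "'d list"  \<comment> \<open>u := op(u1,...,un)\<close>

fun cpvars :: "('p, 'd) cond \<Rightarrow> 'p set" where
  "cpvars (PEq x y) = {x, y}"
| "cpvars (DEq u v) = {}"
| "cpvars (Neg c) = cpvars c"

text \<open>A program: a set of threads (type 't), each given as a control-flow graph (while-program)
  over locations 'l with an initial location; edges are (thread, source, command, target).\<close>
record ('t, 'l, 'p, 'd, 'v) program =
  init  :: "'t \<Rightarrow> 'l"
  edges :: "('t \<times> 'l \<times> ('p, 'd, 'v) cmd \<times> 'l) set"

definition wf_program :: "('t, 'l, 'p, 'd, 'v) program \<Rightarrow> bool" where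
  "wf_program P \<longleftrightarrow>
     (\<forall>t l c l'. (t, l, Assert c, l') \<in> edges P \<longrightarrow> (\<exists>l''. (t, l, Assert (Neg c), l'') \<in> edges P))"

record ('p, 'd, 'v) heap =
  pval :: "'p pexp \<rightharpoonup> adr"
  dval :: "'d dexp \<rightharpoonup> 'v"

definition adrs :: "('p, 'd, 'v) heap \<Rightarrow> nat set" where
  "adrs h = {a. \<exists>e. pval h e = Some (Adr a)} \<union> {a. \<exists>i. pval h (Nxt a i) \<noteq> None}
            \<union> {a. dval h (Dat a) \<noteq> None}"

definition heap0 :: "('p, 'd, 'v) heap" where
  "heap0 = \<lparr>pval = (\<lambda>e. case e of PV x \<Rightarrow> Some Seg | Nxt a i \<Rightarrow> None), dval = Map.empty\<rparr>"

text \<open>An action: executing thread, source location, command, target location, and the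
  nondeterministic choice of a malloc (fresh address and initial data value).\<close>
datatype ('t, 'l, 'p, 'd, 'v) action =
  Act (thr: 't) (src: 'l) (acmd: "('p, 'd, 'v) cmd") (dst: 'l) (choice: "(nat \<times> 'v) option")

fun holds :: "('p, 'd, 'v) heap \<Rightarrow> ('p, 'd) cond \<Rightarrow> bool" where
  "holds h (PEq x y) = (pval h (PV x) = pval h (PV y))"
| "holds h (DEq u v) = (dval h (DV u) = dval h (DV v))"
| "holds h (Neg c) = (\<not> holds h c)"

definition passes :: "('p, 'd, 'v) heap \<Rightarrow> ('p, 'd) cond \<Rightarrow> bool" where
  "passes h c \<longleftrightarrow> holds h c \<or> (\<exists>x\<in>cpvars c. pval h (PV x) = Some Seg)"

fun enabled_cmd :: "('p, 'd, 'v) heap \<Rightarrow> ('p, 'd, 'v) cmd \<Rightarrow> (nat \<times> 'v) option \<Rightarrow> bool" where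
  "enabled_cmd h (Malloc x) ch = (\<exists>a v. ch = Some (a, v) \<and> a \<notin> adrs h)"
| "enabled_cmd h (Assert c) ch = (ch = None \<and> passes h c)"
| "enabled_cmd h (Free x) ch = (ch = None)"
| "enabled_cmd h (RdNext y x i) ch = (ch = None \<and> pval h (PV x) \<noteq> Some Seg)"
| "enabled_cmd h (WrNext x i y) ch = (ch = None \<and> pval h (PV x) \<noteq> Some Seg)"
| "enabled_cmd h (Asgn x y) ch = (ch = None)"
| "enabled_cmd h (RdData u x) ch = (ch = None \<and> pval h (PV x) \<noteq> Some Seg)"
| "enabled_cmd h (WrData x u) ch = (ch = None \<and> pval h (PV x) \<noteq> Some Seg)"
| "enabled_cmd h (Op u f us) ch = (ch = None)"

fun step_cmd :: "('p, 'd, 'v) heap \<Rightarrow> ('p, 'd, 'v) cmd \<Rightarrow> (nat \<times> 'v) option \<Rightarrow> ('p, 'd, 'v) heap" where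
  "step_cmd h (Malloc x) ch = (case ch of
      Some (a, v) \<Rightarrow> h\<lparr>pval := (\<lambda>e. case e of
                                   PV z \<Rightarrow> if z = x then Some (Adr a) else pval h e
                                 | Nxt b i \<Rightarrow> if b = a then Some Seg else pval h e),
                       dval := (dval h)(Dat a \<mapsto> v)\<rparr>
    | None \<Rightarrow> h)"
| "step_cmd h (Assert c) ch = h"
| "step_cmd h (Free x) ch = h"
| "step_cmd h (RdNext y x i) ch = (case pval h (PV x) of
      Some (Adr a) \<Rightarrow> h\<lparr>pval := (pval h)(PV y := pval h (Nxt a i))\<rparr> | _ \<Rightarrow> h)"
| "step_cmd h (WrNext x i y) ch = (case pval h (PV x) of
      Some (Adr a) \<Rightarrow> h\<lparr>pval := (pval h)(Nxt a i := pval h (PV y))\<rparr> | _ \<Rightarrow> h)"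
| "step_cmd h (Asgn x y) ch = h\<lparr>pval := (pval h)(PV x := pval h (PV y))\<rparr>"
| "step_cmd h (RdData u x) ch = (case pval h (PV x) of
      Some (Adr a) \<Rightarrow> h\<lparr>dval := (dval h)(DV u := dval h (Dat a))\<rparr> | _ \<Rightarrow> h)"
| "step_cmd h (WrData x u) ch = (case pval h (PV x) of
      Some (Adr a) \<Rightarrow> h\<lparr>dval := (dval h)(Dat a := dval h (DV u))\<rparr> | _ \<Rightarrow> h)"
| "step_cmd h (Op u f us) ch = h\<lparr>dval := (dval h)(DV u \<mapsto> f (map (\<lambda>w. dval h (DV w)) us))\<rparr>"

definition step :: "('p, 'd, 'v) heap \<Rightarrow> ('t, 'l, 'p, 'd, 'v) action \<Rightarrow> ('p, 'd, 'v) heap" where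
  "step h act = step_cmd h (acmd act) (choice act)"

definition heap_of :: "('t, 'l, 'p, 'd, 'v) action list \<Rightarrow> ('p, 'd, 'v) heap" where
  "heap_of \<sigma> = foldl step heap0 \<sigma>"

fun gc_run :: "('t, 'l, 'p, 'd, 'v) program \<Rightarrow> ('t \<Rightarrow> 'l) \<Rightarrow> ('p, 'd, 'v) heap
                 \<Rightarrow> ('t, 'l, 'p, 'd, 'v) action list \<Rightarrow> bool" where
  "gc_run P pc h [] = True"
| "gc_run P pc h (act # \<sigma>) =
     (pc (thr act) = src act \<and> (thr act, src act, acmd act, dst act) \<in> edges P
      \<and> enabled_cmd h (acmd act) (choice act)
      \<and> gc_run P (pc(thr act := dst act)) (step h act) \<sigma>)"

definition sem_gc :: "('t, 'l, 'p, 'd, 'v) program \<Rightarrow> ('t, 'l, 'p, 'd, 'v) action list set" where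
  "sem_gc P = {\<sigma>. gc_run P (init P) heap0 \<sigma>}"

fun vstep_cmd :: "('p, 'd, 'v) heap \<Rightarrow> 'p pexp set \<Rightarrow> ('p, 'd, 'v) cmd \<Rightarrow> 'p pexp set" where
  "vstep_cmd h V (Malloc x) = insert (PV x) V"
| "vstep_cmd h V (Free x) = (case pval h (PV x) of
      Some (Adr a) \<Rightarrow> V - ({e. pval h e = Some (Adr a)} \<union> {Nxt a i | i. True}) | _ \<Rightarrow> V)"
| "vstep_cmd h V (Asgn x y) = (if PV y \<in> V then insert (PV x) V else V - {PV x})"
| "vstep_cmd h V (WrNext x i y) = (case pval h (PV x) of
      Some (Adr a) \<Rightarrow> (if PV y \<in> V then insert (Nxt a i) V else V - {Nxt a i}) | _ \<Rightarrow> V)"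
| "vstep_cmd h V (RdNext y x i) = (case pval h (PV x) of
      Some (Adr a) \<Rightarrow> (if PV x \<in> V \<and> Nxt a i \<in> V then insert (PV y) V else V - {PV y}) | _ \<Rightarrow> V)"
| "vstep_cmd h V (Assert c) = V"
| "vstep_cmd h V (RdData u x) = V"
| "vstep_cmd h V (WrData x u) = V"
| "vstep_cmd h V (Op u f us) = V"

definition valid :: "('t, 'l, 'p, 'd, 'v) action list \<Rightarrow> 'p pexp set" where
  "valid \<sigma> = snd (foldl (\<lambda>(h, V) act. (step h act, vstep_cmd h V (acmd act))) (heap0, UNIV) \<sigma>)"

fun race_vars :: "('p, 'd, 'v) cmd \<Rightarrow> 'p set" where
  "race_vars (Free x) = {x}"
| "race_vars (RdNext y x i) = {x}"
| "race_vars (WrNext x i y) = {x}"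
| "race_vars (RdData u x) = {x}"
| "race_vars (WrData x u) = {x}"
| "race_vars (Assert c) = cpvars c"
| "race_vars (Malloc x) = {}"
| "race_vars (Asgn x y) = {}"
| "race_vars (Op u f us) = {}"

definition pointer_race :: "('t, 'l, 'p, 'd, 'v) action list \<Rightarrow> ('t, 'l, 'p, 'd, 'v) action \<Rightarrow> bool" where
  "pointer_race \<sigma> act \<longleftrightarrow> (\<exists>x \<in> race_vars (acmd act). PV x \<notin> valid \<sigma>)"

definition PRF :: "('t, 'l, 'p, 'd, 'v) action list set \<Rightarrow> bool" where
  "PRF S \<longleftrightarrow> (\<forall>\<sigma>\<in>S. \<forall>\<tau> act. (\<exists>\<rho>. \<sigma> = \<tau> @ [act] @ \<rho>) \<longrightarrow> \<not> pointer_race \<tau> act)"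

end

theory Submission
  imports Defs
begin

lemma fold_fst: "fst (foldl (\<lambda>(h, V) act. (step h act, vstep_cmd h V (acmd act))) (h, V) xs)
   = foldl step h xs"
  by (induction xs arbitrary: h V) auto

lemma fold_hv: "foldl (\<lambda>(h, V) act. (step h act, vstep_cmd h V (acmd act))) (heap0, UNIV) \<tau>
   = (heap_of \<tau>, valid \<tau>)"
  using fold_fst[of heap0 UNIV \<tau>] by (simp add: heap_of_def valid_def prod_eq_iff)

lemma heap_of_snoc[simp]: "heap_of (\<tau> @ [a]) = step (heap_of \<tau>) a"
  by (simp add: heap_of_def)

lemma valid_snoc[simp]: "valid (\<tau> @ [a]) = vstep_cmd (heap_of \<tau>) (valid \<tau>) (acmd a)"
proof -
  have "valid (\<tau> @ [a]) = snd ((\<lambda>(h, V) act. (step h act, vstep_cmd h V (acmd act)))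
     (foldl (\<lambda>(h, V) act. (step h act, vstep_cmd h V (acmd act))) (heap0, UNIV) \<tau>) a)"
    by (simp add: valid_def)
  also have "\<dots> = vstep_cmd (heap_of \<tau>) (valid \<tau>) (acmd a)" by (simp add: fold_hv)
  finally show ?thesis .
qed

lemma heap_of_Nil[simp]: "heap_of [] = heap0" by (simp add: heap_of_def)
lemma valid_Nil[simp]: "valid [] = UNIV" by (simp add: valid_def)

lemma gc_run_app: "gc_run P pc h (xs @ ys) \<Longrightarrow> gc_run P pc h xs"
  by (induction xs arbitrary: pc h) auto

lemma gc_run_snoc_en: "gc_run P pc h (xs @ [a]) \<Longrightarrow> enabled_cmd (foldl step h xs) (acmd a) (choice a)"
  by (induction xs arbitrary: pc h) auto

lemma sem_pref: "xs @ ys \<in> sem_gc P \<Longrightarrow> xs \<in> sem_gc P"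
  by (auto simp: sem_gc_def dest: gc_run_app)

lemma sem_en: "xs @ [a] \<in> sem_gc P \<Longrightarrow> enabled_cmd (heap_of xs) (acmd a) (choice a)"
  by (auto simp: sem_gc_def heap_of_def dest: gc_run_snoc_en)

definition H :: "('p, 'd, 'v) heap \<Rightarrow> bool" where
  "H h \<longleftrightarrow> (\<forall>x. pval h (PV x) \<noteq> None) \<and> (\<forall>e a i. pval h e = Some (Adr a) \<longrightarrow> pval h (Nxt a i) \<noteq> None)"

lemma adrsI: "pval h e = Some (Adr a) \<Longrightarrow> a \<in> adrs h"
  by (auto simp: adrs_def)

lemma adrsI2: "pval h (Nxt a i) \<noteq> None \<Longrightarrow> a \<in> adrs h"
  by (auto simp: adrs_def)

lemma H_step: "H h \<Longrightarrow> enabled_cmd h (acmd act) (choice act) \<Longrightarrow> H (step h act)"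
  apply (cases "acmd act")
  apply (auto simp: H_def step_def split: option.splits adr.splits pexp.splits if_splits dest: adrsI)
  done

lemma H0: "H heap0" by (auto simp: H_def heap0_def split: pexp.splits)

lemma H_sem: "\<tau> \<in> sem_gc P \<Longrightarrow> H (heap_of \<tau>)"
proof (induction \<tau> rule: rev_induct)
  case Nil then show ?case by (simp add: H0)
next
  case (snoc a xs)
  then show ?case using sem_pref[of xs "[a]"] sem_en[of xs a] H_step by auto
qed

lemma nxt_persist: "H h \<Longrightarrow> pval h (Nxt a i) \<noteq> None \<Longrightarrow> pval (step h act) (Nxt a i) \<noteq> None"
  apply (cases "acmd act")
  apply (auto simp: H_def step_def split: option.splits adr.splits pexp.splits if_splits)
  done

lemma pval_data[simp]: "pval (step_cmd h (WrData x u) ch) = pval h"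
  "pval (step_cmd h (RdData u x) ch) = pval h"
  by (auto split: option.splits adr.splits)

definition freed :: "('t, 'l, 'p, 'd, 'v) action list \<Rightarrow> nat \<Rightarrow> bool" where
  "freed \<tau> a \<longleftrightarrow> (\<exists>\<sigma>1 act1 \<sigma>2 x. \<tau> = \<sigma>1 @ [act1] @ \<sigma>2 \<and> acmd act1 = Free x
       \<and> pval (heap_of \<sigma>1) (PV x) = Some (Adr a))"

lemma freed_Nil[simp]: "\<not> freed [] a" by (simp add: freed_def)

lemma freed_snoc: "freed (\<tau> @ [act]) a \<longleftrightarrow> freed \<tau> a \<or>
   (\<exists>x. acmd act = Free x \<and> pval (heap_of \<tau>) (PV x) = Some (Adr a))"
proof
  assume "freed (\<tau> @ [act]) a"
  then obtain \<sigma>1 act1 \<sigma>2 x where e: "\<tau> @ [act] = \<sigma>1 @ [act1] @ \<sigma>2" "acmd act1 = Free x"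
       "pval (heap_of \<sigma>1) (PV x) = Some (Adr a)" by (auto simp: freed_def)
  show "freed \<tau> a \<or> (\<exists>x. acmd act = Free x \<and> pval (heap_of \<tau>) (PV x) = Some (Adr a))"
  proof (cases \<sigma>2 rule: rev_cases)
    case Nil then show ?thesis using e by auto
  next
    case (snoc ys y)
    then have "\<tau> = \<sigma>1 @ [act1] @ ys" using e by auto
    then show ?thesis using e unfolding freed_def by blast
  qed
next
  assume "freed \<tau> a \<or> (\<exists>x. acmd act = Free x \<and> pval (heap_of \<tau>) (PV x) = Some (Adr a))"
  then show "freed (\<tau> @ [act]) a"
    unfolding freed_def by (metis append.assoc append_Cons append_Nil)
qed

lemma freed_adrs: "\<tau> \<in> sem_gc P \<Longrightarrow> freed \<tau> a \<Longrightarrow> pval (heap_of \<tau>) (Nxt a 0) \<noteq> None"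
proof (induction \<tau> rule: rev_induct)
  case Nil then show ?case by simp
next
  case (snoc act xs)
  have xs: "xs \<in> sem_gc P" using snoc.prems sem_pref by blast
  have "pval (heap_of xs) (Nxt a 0) \<noteq> None"
  proof (cases "freed xs a")
    case True then show ?thesis using snoc.IH xs by blast
  next
    case False
    then obtain x where "pval (heap_of xs) (PV x) = Some (Adr a)"
      using snoc.prems freed_snoc by blast
    then show ?thesis using H_sem[OF xs] unfolding H_def by blast
  qed
  then show ?case using nxt_persist H_sem[OF xs] by simp
qed

lemma J: "\<tau> \<in> sem_gc P \<Longrightarrow> e \<in> valid \<tau> \<Longrightarrow> freed \<tau> a \<Longrightarrow> pval (heap_of \<tau>) e \<noteq> Some (Adr a)"
proof (induction \<tau> arbitrary: e rule: rev_induct)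
  case Nil then show ?case by simp
next
  case (snoc act xs)
  have xs: "xs \<in> sem_gc P" using snoc.prems sem_pref by blast
  have en: "enabled_cmd (heap_of xs) (acmd act) (choice act)" using snoc.prems sem_en by blast
  note IH = snoc.IH[OF xs]
  have fa: "freed xs a \<Longrightarrow> a \<notin> adrs (heap_of xs) \<Longrightarrow> False"
    using freed_adrs[OF xs] adrsI2 by blast
  show ?case
  proof (cases "acmd act")
    case (Free x)
    then show ?thesis using snoc.prems IH
      by (auto simp: freed_snoc step_def split: option.splits adr.splits)
  next
    case (Malloc x)
    then show ?thesis using snoc.prems IH en fa freed_snoc[of xs act a]
      by (auto simp: step_def split: option.splits adr.splits pexp.splits if_splits)
  next
    case (Asgn x y)
    then show ?thesis using snoc.prems IH freed_snoc[of xs act a]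
      by (auto simp: step_def split: option.splits adr.splits pexp.splits if_splits)
  next
    case (RdNext y x i)
    then show ?thesis using snoc.prems IH freed_snoc[of xs act a]
      by (auto simp: step_def split: option.splits adr.splits pexp.splits if_splits)
  next
    case (WrNext x i y)
    then show ?thesis using snoc.prems IH freed_snoc[of xs act a]
      by (auto simp: step_def split: option.splits adr.splits pexp.splits if_splits)
  qed (use snoc.prems IH freed_snoc[of xs act a] in \<open>auto simp: step_def split: option.splits adr.splits\<close>)
qed


definition bad :: "('t, 'l, 'p, 'd, 'v) action list \<Rightarrow> 'p pexp \<Rightarrow> bool" where
  "bad \<tau> e \<longleftrightarrow> (\<exists>b i. e = Nxt b i \<and> freed \<tau> b) \<or> (\<exists>a. pval (heap_of \<tau>) e = Some (Adr a) \<and> freed \<tau> a)"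

lemma freed_mono: "freed \<tau> a \<Longrightarrow> freed (\<tau> @ [act]) a"
  using freed_snoc by blast

lemma I: "\<tau> \<in> sem_gc P \<Longrightarrow> (\<forall>\<tau>1 b \<tau>2. \<tau> = \<tau>1 @ [b] @ \<tau>2 \<longrightarrow> \<not> pointer_race \<tau>1 b)
   \<Longrightarrow> e \<notin> valid \<tau> \<Longrightarrow> bad \<tau> e"
proof (induction \<tau> arbitrary: e rule: rev_induct)
  case Nil then show ?case by simp
next
  case (snoc act xs)
  have xs: "xs \<in> sem_gc P" using snoc.prems sem_pref by blast
  have en: "enabled_cmd (heap_of xs) (acmd act) (choice act)" using snoc.prems sem_en by blast
  have nr: "\<forall>\<tau>1 b \<tau>2. xs = \<tau>1 @ [b] @ \<tau>2 \<longrightarrow> \<not> pointer_race \<tau>1 b"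
    using snoc.prems(2) by (metis append.assoc)
  have nr2: "\<not> pointer_race xs act" using snoc.prems(2) by auto
  have IH: "\<And>e. e \<notin> valid xs \<Longrightarrow> bad xs e" using snoc.IH[OF xs nr] by blast
  have Hh: "H (heap_of xs)" using H_sem[OF xs] .
  have fa: "\<And>a. freed xs a \<Longrightarrow> a \<notin> adrs (heap_of xs) \<Longrightarrow> False"
    using freed_adrs[OF xs] adrsI2 by blast
  let ?h = "heap_of xs"
  show ?case
  proof (cases "acmd act")
    case (Free x)
    show ?thesis
    proof (cases "e \<in> valid xs")
      case True
      then show ?thesis using snoc.prems(3) Free
        by (auto simp: bad_def freed_snoc step_def split: option.splits adr.splits)
    next
      case False
      then show ?thesis using IH[OF False] Free
        by (auto simp: bad_def freed_snoc step_def)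
    qed
  next
    case (Malloc x)
    then obtain b v where ch: "choice act = Some (b, v)" "b \<notin> adrs ?h" using en by auto
    have ev: "e \<notin> valid xs" "e \<noteq> PV x" using snoc.prems(3) Malloc by auto
    have "\<And>j a. e = Nxt b j \<Longrightarrow> pval ?h e = Some (Adr a) \<Longrightarrow> False"
      using ch adrsI2 by fastforce
    then show ?thesis using IH[OF ev(1)] ev Malloc ch
      by (auto simp: bad_def freed_snoc step_def split: pexp.splits)
  next
    case (Asgn x y)
    show ?thesis
    proof (cases "e = PV x")
      case True
      then have "PV y \<notin> valid xs" using snoc.prems(3) Asgn by (auto split: if_splits)
      then show ?thesis using IH[of "PV y"] True Asgn
        by (auto simp: bad_def freed_snoc step_def)
    next
      case False
      then have "e \<notin> valid xs" using snoc.prems(3) Asgn by (auto split: if_splits)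
      then show ?thesis using IH[of e] False Asgn
        by (auto simp: bad_def freed_snoc step_def)
    qed
  next
    case (RdNext y x i)
    have vx: "PV x \<in> valid xs" using nr2 RdNext by (auto simp: pointer_race_def)
    obtain c where c: "pval ?h (PV x) = Some (Adr c)"
      using en RdNext Hh unfolding H_def by (cases "pval ?h (PV x)"; cases "the (pval ?h (PV x))"; auto)
    show ?thesis
    proof (cases "e = PV y")
      case True
      then have nv: "Nxt c i \<notin> valid xs" using snoc.prems(3) RdNext vx c by (auto split: if_splits)
      have "\<not> freed xs c" using J[OF xs vx] c by blast
      then obtain a where "pval ?h (Nxt c i) = Some (Adr a)" "freed xs a"
        using IH[OF nv] by (auto simp: bad_def)
      then show ?thesis using True RdNext c by (auto simp: bad_def freed_snoc step_def)
    next
      case False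
      then have "e \<notin> valid xs" using snoc.prems(3) RdNext c by (auto split: if_splits)
      then show ?thesis using IH[of e] False RdNext c
        by (auto simp: bad_def freed_snoc step_def)
    qed
  next
    case (WrNext x i y)
    show ?thesis
    proof (cases "\<exists>c. pval ?h (PV x) = Some (Adr c)")
      case True
      then obtain c where c: "pval ?h (PV x) = Some (Adr c)" by blast
      show ?thesis
      proof (cases "e = Nxt c i")
        case True
        then have "PV y \<notin> valid xs" using snoc.prems(3) WrNext c by (auto split: if_splits)
        then show ?thesis using IH[of "PV y"] True WrNext c
          by (auto simp: bad_def freed_snoc step_def)
      next
        case False
        then have "e \<notin> valid xs" using snoc.prems(3) WrNext c by (auto split: if_splits)
        then show ?thesis using IH[of e] False WrNext c
          by (auto simp: bad_def freed_snoc step_def)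
      qed
    next
      case False
      then have eq: "step ?h act = ?h" "valid (xs @ [act]) = valid xs" using WrNext
        by (auto simp: step_def split: option.splits adr.splits)
      then show ?thesis using IH[of e] snoc.prems(3) by (auto simp: bad_def freed_snoc)
    qed
  next
    case (Assert c)
    then show ?thesis using IH[of e] snoc.prems(3) by (auto simp: bad_def freed_snoc step_def)
  next
    case (Op u f us)
    then show ?thesis using IH[of e] snoc.prems(3) by (auto simp: bad_def freed_snoc step_def)
  next
    case (RdData u x)
    then have "pval (step ?h act) = pval ?h" by (auto simp: step_def split: option.splits adr.splits)
    then show ?thesis using RdData IH[of e] snoc.prems(3) by (auto simp: bad_def freed_snoc)
  next
    case (WrData x u)
    then have "pval (step ?h act) = pval ?h" by (auto simp: step_def split: option.splits adr.splits)
    then show ?thesis using WrData IH[of e] snoc.prems(3) by (auto simp: bad_def freed_snoc)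
  qed
qed


lemma race_wit:
  assumes "\<sigma> \<in> sem_gc P" "\<sigma> = \<tau> @ [act] @ \<rho>" "pointer_race \<tau> act"
  shows "\<exists>\<sigma>1 act1 \<sigma>2 act2 x y a.
          \<sigma>1 @ [act1] @ \<sigma>2 @ [act2] \<in> sem_gc P
        \<and> acmd act1 = Free x \<and> pval (heap_of \<sigma>1) (PV x) = Some (Adr a)
        \<and> y \<in> race_vars (acmd act2)
        \<and> pval (heap_of (\<sigma>1 @ [act1] @ \<sigma>2)) (PV y) = Some (Adr a)"
  using assms
proof (induction "length \<tau>" arbitrary: \<tau> act \<rho> rule: less_induct)
  case less
  show ?case
  proof (cases "\<exists>\<tau>1 b \<tau>2. \<tau> = \<tau>1 @ [b] @ \<tau>2 \<and> pointer_race \<tau>1 b")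
    case True
    then obtain \<tau>1 b \<tau>2 where t: "\<tau> = \<tau>1 @ [b] @ \<tau>2" "pointer_race \<tau>1 b" by blast
    then show ?thesis using less.hyps[of \<tau>1 b "\<tau>2 @ [act] @ \<rho>"] less.prems by auto
  next
    case False
    have ta: "\<tau> @ [act] \<in> sem_gc P" using less.prems sem_pref[of "\<tau> @ [act]" \<rho>] by simp
    have t: "\<tau> \<in> sem_gc P" using sem_pref ta by blast
    obtain y where y: "y \<in> race_vars (acmd act)" "PV y \<notin> valid \<tau>"
      using less.prems(3) by (auto simp: pointer_race_def)
    have "bad \<tau> (PV y)" using I[OF t _ y(2)] False by blast
    then obtain a where a: "pval (heap_of \<tau>) (PV y) = Some (Adr a)" "freed \<tau> a"
      by (auto simp: bad_def)
    then obtain \<sigma>1 act1 \<sigma>2 x where "\<tau> = \<sigma>1 @ [act1] @ \<sigma>2" "acmd act1 = Free x"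
       "pval (heap_of \<sigma>1) (PV x) = Some (Adr a)" by (auto simp: freed_def)
    then show ?thesis using ta y a by fastforce
  qed
qed

theorem mainTheorem8:
  fixes P :: "('t, 'l, 'p, 'd, 'v) program"
  assumes "wf_program P"
  shows "PRF (sem_gc P) \<longleftrightarrow>
    \<not> (\<exists>\<sigma>1 act1 \<sigma>2 act2 x y a.
          \<sigma>1 @ [act1] @ \<sigma>2 @ [act2] \<in> sem_gc P
        \<and> acmd act1 = Free x \<and> pval (heap_of \<sigma>1) (PV x) = Some (Adr a)
        \<and> y \<in> race_vars (acmd act2)
        \<and> pval (heap_of (\<sigma>1 @ [act1] @ \<sigma>2)) (PV y) = Some (Adr a))"
proof
  assume hprf: "PRF (sem_gc P)"
  show "\<not> (\<exists>\<sigma>1 act1 \<sigma>2 act2 x y a.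
          \<sigma>1 @ [act1] @ \<sigma>2 @ [act2] \<in> sem_gc P
        \<and> acmd act1 = Free x \<and> pval (heap_of \<sigma>1) (PV x) = Some (Adr a)
        \<and> y \<in> race_vars (acmd act2)
        \<and> pval (heap_of (\<sigma>1 @ [act1] @ \<sigma>2)) (PV y) = Some (Adr a))"
  proof
    assume "\<exists>\<sigma>1 act1 \<sigma>2 act2 x y a.
          \<sigma>1 @ [act1] @ \<sigma>2 @ [act2] \<in> sem_gc P
        \<and> acmd act1 = Free x \<and> pval (heap_of \<sigma>1) (PV x) = Some (Adr a)
        \<and> y \<in> race_vars (acmd act2)
        \<and> pval (heap_of (\<sigma>1 @ [act1] @ \<sigma>2)) (PV y) = Some (Adr a)"
    then obtain \<sigma>1 act1 \<sigma>2 act2 x y a where w: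
          "\<sigma>1 @ [act1] @ \<sigma>2 @ [act2] \<in> sem_gc P"
          "acmd act1 = Free x" "pval (heap_of \<sigma>1) (PV x) = Some (Adr a)"
          "y \<in> race_vars (acmd act2)"
          "pval (heap_of (\<sigma>1 @ [act1] @ \<sigma>2)) (PV y) = Some (Adr a)" by blast
    let ?t = "\<sigma>1 @ [act1] @ \<sigma>2"
    have t: "?t \<in> sem_gc P" using sem_pref[of ?t "[act2]"] w(1) by simp
    have f: "freed ?t a" unfolding freed_def using w(2,3) by blast
    have "PV y \<notin> valid ?t" using J[OF t _ f] w(5) by blast
    then have "pointer_race ?t act2" using w(4) by (auto simp: pointer_race_def)
    moreover have "?t @ [act2] @ [] \<in> sem_gc P" using w(1) by simp
    ultimately show False using hprf unfolding PRF_def by blast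
  qed
next
  assume n: "\<not> (\<exists>\<sigma>1 act1 \<sigma>2 act2 x y a.
          \<sigma>1 @ [act1] @ \<sigma>2 @ [act2] \<in> sem_gc P
        \<and> acmd act1 = Free x \<and> pval (heap_of \<sigma>1) (PV x) = Some (Adr a)
        \<and> y \<in> race_vars (acmd act2)
        \<and> pval (heap_of (\<sigma>1 @ [act1] @ \<sigma>2)) (PV y) = Some (Adr a))"
  show "PRF (sem_gc P)"
    unfolding PRF_def using race_wit n by blast
qed

end
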